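(* Let $\{M_p\mid p\in P\}$ be a Morse decomposition of a multivector field on a finite simplicial complex $K$, with associated $P$-filtered chain complex $(C,d)$, let $(\bar C,\bar d)$ be a Conley complex of $(C,d)$, let $f:K\to\mathbb R$ be Lyapunov for the Morse decomposition, and let $P_f$ be an $f$-compatible order. Then the persistence modules $H(\mathbf C,P_f)$ and $H(\bar{\mathbf C},P_f)$ are isomorphic.
   Context: $K$ is a finite simplicial complex; a multivector field $\mathcal V$ on $K$ is a partition of $K$ into convex sets $V$ (if $\sigma,\tau\in V$ and $\sigma\le\mu\le\tau$ in the face order then $\mu\in V$); $F_{\mathcal V}(\sigma)=[\sigma]_{\mathcal V}\cup\{\tau:\tau\le\sigma\}$ where $[\sigma]_{\mathcal V}$ is the part containing $\sigma$; a path is a sequence $\sigma_1,\dots,\sigma_r$ with $\sigma_k\in F_{\mathcal V}(\sigma_{k-1})$. A Morse decomposition indexed by a finite poset $(P,\le_P)$ is a partition $K=\bigsqcup_{p\in P}M_p$ such that every path from $M_p$ to $M_q$ has $q\le_P p$. Let $m=|P|$. $(C,d)$: $C_p$ is the $\mathbb Z_2$-span of the simplices in $M_p$ (graded by dimension), $C=\bigoplus_pC_p$ the simplicial chains of $K$ over $\mathbb Z_2$, $d$ the simplicial boundary. For $P$-graded spaces and a linear map $h$, $h_{pq}=\pi_p h\iota_q$, and $h$ is $P$-filtered if $h_{pq}\ne0\Rightarrow p\le_P q$. A $P$-filtered chain complex is a $\mathbb Z_2$ chain complex with a $P$-gradation (compatible with degree) whose differential is $P$-filtered. Filtered chain maps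 are $P$-filtered chain maps; filtered chain maps $\varphi,\psi$ are filtered chain homotopic if $\psi-\varphi=d'S+Sd$ for some $P$-filtered degree-raising-by-one linear $S$; two $P$-filtered complexes are filtered chain homotopic if there are filtered chain maps $\varphi,\varphi'$ between them with $\varphi'\varphi$ and $\varphi\varphi'$ filtered chain homotopic to the identities. A Conley complex of $(C,d)$ is a $P$-filtered chain complex $(\bar C,\bar d)$ filtered chain homotopic to $(C,d)$ with $\bar d_{pp}=0$ for all $p$. $f:K\to\mathbb R$ is Lyapunov if $f$ is constant on each $M_p$, with value $f(p)$, and $p\le_P q\Rightarrow f(p)\le f(q)$. An $f$-compatible order $P_f$ is an enumeration $p_1,\dots,p_m$ of $P$ that is a linear extension of $\le_P$ with $f(p_1)\le\dots\le f(p_m)$. For a $P$-filtered chain complex $(D,\delta)$, $\mathbf D_{p_i}=\bigoplus_{j\le i}D_{p_j}$ with the restricted differential is a subcomplex, and $H(\mathbf D,P_f)$ is the persistence module $H_*(\mathbf D_{p_1})\to\dots\to H_*(\mathbf D_{p_m})$ with maps induced by inclusions; this applies to $(C,d)$ giving $H(\mathbf C,P_f)$ and to $(\bar C,\bar d)$ giving $H(\bar{\mathbf C},P_f)$. *)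

theory Defs
  imports Complex_Main "HOL-Library.Z2" "HOL-Library.Disjoint_Sets"
begin

definition simplicial_complex :: "'v set set \<Rightarrow> bool" where
  "simplicial_complex K \<longleftrightarrow> finite K \<and>
     (\<forall>\<sigma>\<in>K. finite \<sigma> \<and> \<sigma> \<noteq> {}) \<and>
     (\<forall>\<sigma>\<in>K. \<forall>\<tau>. \<tau> \<subseteq> \<sigma> \<and> \<tau> \<noteq> {} \<longrightarrow> \<tau> \<in> K)"

definition convex_in :: "'v set set \<Rightarrow> 'v set set \<Rightarrow> bool" where
  "convex_in K V \<longleftrightarrow> (\<forall>\<sigma>\<in>V. \<forall>\<tau>\<in>V. \<forall>\<mu>\<in>K. \<sigma> \<subseteq> \<mu> \<and> \<mu> \<subseteq> \<tau> \<longrightarrow> \<mu> \<in> V)"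

definition multivector_field :: "'v set set \<Rightarrow> 'v set set set \<Rightarrow> bool" where
  "multivector_field K \<V> \<longleftrightarrow> partition_on K \<V> \<and> (\<forall>V\<in>\<V>. convex_in K V)"

definition mv_class :: "'v set set set \<Rightarrow> 'v set \<Rightarrow> 'v set set" where
  "mv_class \<V> \<sigma> = (THE V. V \<in> \<V> \<and> \<sigma> \<in> V)"

definition F_map :: "'v set set \<Rightarrow> 'v set set set \<Rightarrow> 'v set \<Rightarrow> 'v set set" where
  "F_map K \<V> \<sigma> = mv_class \<V> \<sigma> \<union> {\<tau>\<in>K. \<tau> \<subseteq> \<sigma>}"

definition is_path :: "'v set set \<Rightarrow> 'v set set set \<Rightarrow> 'v set list \<Rightarrow> bool" where
  "is_path K \<V> xs \<longleftrightarrow> xs \<noteq> [] \<and> set xs \<subseteq> K \<and>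
     (\<forall>k. Suc k < length xs \<longrightarrow> xs ! Suc k \<in> F_map K \<V> (xs ! k))"

text \<open>Morse decomposition indexed by the finite poset \<open>(P, r)\<close>, \<open>(p,q) \<in> r\<close> meaning \<open>p \<le>\<^sub>P q\<close>.\<close>
definition morse_decomposition ::
  "'v set set \<Rightarrow> 'v set set set \<Rightarrow> 'p set \<Rightarrow> ('p \<times> 'p) set \<Rightarrow> ('p \<Rightarrow> 'v set set) \<Rightarrow> bool" where
  "morse_decomposition K \<V> P r M \<longleftrightarrow>
     finite P \<and> partial_order_on P r \<and>
     (\<Union>p\<in>P. M p) = K \<and>
     (\<forall>p\<in>P. \<forall>q\<in>P. p \<noteq> q \<longrightarrow> M p \<inter> M q = {}) \<and>
     (\<forall>p\<in>P. \<forall>q\<in>P. \<forall>xs. is_path K \<V> xs \<and> hd xs \<in> M p \<and> last xs \<in> M q \<longrightarrow> (q, p) \<in> r)"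

text \<open>A P-graded, degree-graded Z2 vector space is represented by a homogeneous basis
  \<open>gens\<close> with a P-grade and a degree for each basis element; chains are finitely supported
  functions \<open>gens \<Rightarrow> bit\<close>. A linear map is given by the images of basis elements.\<close>
record ('b, 'p) fcomplex =
  gens  :: "'b set"
  grade :: "'b \<Rightarrow> 'p"
  deg   :: "'b \<Rightarrow> int"
  bd    :: "'b \<Rightarrow> 'b \<Rightarrow> bit"

definition supp :: "('b \<Rightarrow> bit) \<Rightarrow> 'b set" where
  "supp c = {b. c b \<noteq> 0}"

definition lapply :: "('b \<Rightarrow> 'c \<Rightarrow> bit) \<Rightarrow> ('b \<Rightarrow> bit) \<Rightarrow> ('c \<Rightarrow> bit)" where
  "lapply h c = (\<lambda>y. \<Sum>b\<in>supp c. c b * h b y)"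

definition is_chain_in :: "'b set \<Rightarrow> ('b \<Rightarrow> bit) \<Rightarrow> bool" where
  "is_chain_in B c \<longleftrightarrow> finite (supp c) \<and> supp c \<subseteq> B"

definition hom_deg :: "('b, 'p, 'z) fcomplex_scheme \<Rightarrow> int \<Rightarrow> ('b \<Rightarrow> bit) \<Rightarrow> bool" where
  "hom_deg D n c \<longleftrightarrow> is_chain_in (gens D) c \<and> (\<forall>y\<in>supp c. deg D y = n)"

text \<open>\<open>h\<close> (from \<open>D1\<close> to \<open>D2\<close>) is \<open>P\<close>-filtered: \<open>h\<^sub>p\<^sub>q \<noteq> 0 \<Longrightarrow> p \<le>\<^sub>P q\<close>.\<close>
definition filtered_map ::
  "('p \<times> 'p) set \<Rightarrow> ('b, 'p, 'z) fcomplex_scheme \<Rightarrow> ('c, 'p, 'w) fcomplex_scheme \<Rightarrow> ('b \<Rightarrow> 'c \<Rightarrow> bit) \<Rightarrow> bool" where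
  "filtered_map r D1 D2 h \<longleftrightarrow> (\<forall>b\<in>gens D1. \<forall>y. h b y \<noteq> 0 \<longrightarrow> (grade D2 y, grade D1 b) \<in> r)"

definition filtered_complex :: "'p set \<Rightarrow> ('p \<times> 'p) set \<Rightarrow> ('b, 'p, 'z) fcomplex_scheme \<Rightarrow> bool" where
  "filtered_complex P r D \<longleftrightarrow>
     (\<forall>b\<in>gens D. grade D b \<in> P) \<and>
     (\<forall>b\<in>gens D. hom_deg D (deg D b - 1) (bd D b)) \<and>
     filtered_map r D D (bd D) \<and>
     (\<forall>b\<in>gens D. lapply (bd D) (bd D b) = (\<lambda>_. 0))"

definition filtered_chain_map ::
  "('p \<times> 'p) set \<Rightarrow> ('b, 'p, 'z) fcomplex_scheme \<Rightarrow> ('c, 'p, 'w) fcomplex_scheme \<Rightarrow> ('b \<Rightarrow> 'c \<Rightarrow> bit) \<Rightarrow> bool" where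
  "filtered_chain_map r D1 D2 \<phi> \<longleftrightarrow>
     (\<forall>b\<in>gens D1. hom_deg D2 (deg D1 b) (\<phi> b)) \<and>
     filtered_map r D1 D2 \<phi> \<and>
     (\<forall>b\<in>gens D1. lapply (bd D2) (\<phi> b) = lapply \<phi> (bd D1 b))"

definition filtered_homotopic ::
  "('p \<times> 'p) set \<Rightarrow> ('b, 'p, 'z) fcomplex_scheme \<Rightarrow> ('c, 'p, 'w) fcomplex_scheme \<Rightarrow>
   ('b \<Rightarrow> 'c \<Rightarrow> bit) \<Rightarrow> ('b \<Rightarrow> 'c \<Rightarrow> bit) \<Rightarrow> bool" where
  "filtered_homotopic r D1 D2 \<phi> \<psi> \<longleftrightarrow>
     (\<exists>S. (\<forall>b\<in>gens D1. hom_deg D2 (deg D1 b + 1) (S b)) \<and>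
          filtered_map r D1 D2 S \<and>
          (\<forall>b\<in>gens D1. (\<lambda>y. \<psi> b y - \<phi> b y) =
                         (\<lambda>y. lapply (bd D2) (S b) y + lapply S (bd D1 b) y)))"

definition comp_map :: "('b \<Rightarrow> 'c \<Rightarrow> bit) \<Rightarrow> ('c \<Rightarrow> 'e \<Rightarrow> bit) \<Rightarrow> ('b \<Rightarrow> 'e \<Rightarrow> bit)" where
  "comp_map \<phi> \<psi> = (\<lambda>b. lapply \<psi> (\<phi> b))"  \<comment> \<open>first \<open>\<phi>\<close>, then \<open>\<psi>\<close>\<close>

definition id_map :: "'b \<Rightarrow> 'b \<Rightarrow> bit" where
  "id_map = (\<lambda>b y. if y = b then 1 else 0)"

definition filtered_chain_homotopy_equivalent ::
  "('p \<times> 'p) set \<Rightarrow> ('b, 'p, 'z) fcomplex_scheme \<Rightarrow> ('c, 'p, 'w) fcomplex_scheme \<Rightarrow> bool" where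
  "filtered_chain_homotopy_equivalent r D1 D2 \<longleftrightarrow>
     (\<exists>\<phi> \<phi>'. filtered_chain_map r D1 D2 \<phi> \<and> filtered_chain_map r D2 D1 \<phi>' \<and>
        filtered_homotopic r D1 D1 id_map (comp_map \<phi> \<phi>') \<and>
        filtered_homotopic r D2 D2 id_map (comp_map \<phi>' \<phi>))"

definition conley_complex ::
  "'p set \<Rightarrow> ('p \<times> 'p) set \<Rightarrow> ('b, 'p, 'z) fcomplex_scheme \<Rightarrow> ('c, 'p, 'w) fcomplex_scheme \<Rightarrow> bool" where
  "conley_complex P r D Dbar \<longleftrightarrow>
     filtered_complex P r Dbar \<and> filtered_chain_homotopy_equivalent r D Dbar \<and>
     (\<forall>b\<in>gens Dbar. \<forall>y\<in>gens Dbar. grade Dbar y = grade Dbar b \<longrightarrow> bd Dbar b y = 0)"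

definition morse_chain_complex ::
  "'v set set \<Rightarrow> 'p set \<Rightarrow> ('p \<Rightarrow> 'v set set) \<Rightarrow> ('v set, 'p) fcomplex" where
  "morse_chain_complex K P M =
     \<lparr> gens = K,
       grade = (\<lambda>\<sigma>. THE p. p \<in> P \<and> \<sigma> \<in> M p),
       deg = (\<lambda>\<sigma>. int (card \<sigma>) - 1),
       bd = (\<lambda>\<sigma> \<tau>. if \<tau> \<in> K \<and> \<tau> \<subseteq> \<sigma> \<and> card \<tau> + 1 = card \<sigma> then 1 else 0) \<rparr>"

text \<open>\<open>f\<close> is Lyapunov; \<open>fv p\<close> is the constant value \<open>f(p)\<close> of \<open>f\<close> on \<open>M\<^sub>p\<close>.\<close>
definition lyapunov ::
  "'p set \<Rightarrow> ('p \<times> 'p) set \<Rightarrow> ('p \<Rightarrow> 'v set set) \<Rightarrow> ('v set \<Rightarrow> real) \<Rightarrow> ('p \<Rightarrow> real) \<Rightarrow> bool" where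
  "lyapunov P r M f fv \<longleftrightarrow>
     (\<forall>p\<in>P. \<forall>\<sigma>\<in>M p. f \<sigma> = fv p) \<and>
     (\<forall>p\<in>P. \<forall>q\<in>P. (p, q) \<in> r \<longrightarrow> fv p \<le> fv q)"

text \<open>An enumeration \<open>ps = [p\<^sub>1,\<dots>,p\<^sub>m]\<close> (0-indexed here).\<close>
definition compatible_order ::
  "'p set \<Rightarrow> ('p \<times> 'p) set \<Rightarrow> ('p \<Rightarrow> real) \<Rightarrow> 'p list \<Rightarrow> bool" where
  "compatible_order P r fv ps \<longleftrightarrow>
     distinct ps \<and> set ps = P \<and>
     (\<forall>i<length ps. \<forall>j<length ps. (ps ! i, ps ! j) \<in> r \<longrightarrow> i \<le> j) \<and>
     (\<forall>i j. i \<le> j \<and> j < length ps \<longrightarrow> fv (ps ! i) \<le> fv (ps ! j))"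

definition sub_chains :: "('b, 'p, 'z) fcomplex_scheme \<Rightarrow> 'p set \<Rightarrow> int \<Rightarrow> ('b \<Rightarrow> bit) set" where
  "sub_chains D Q n = {c. hom_deg D n c \<and> (\<forall>b\<in>supp c. grade D b \<in> Q)}"

definition cycles :: "('b, 'p, 'z) fcomplex_scheme \<Rightarrow> 'p set \<Rightarrow> int \<Rightarrow> ('b \<Rightarrow> bit) set" where
  "cycles D Q n = {c \<in> sub_chains D Q n. lapply (bd D) c = (\<lambda>_. 0)}"

definition boundaries :: "('b, 'p, 'z) fcomplex_scheme \<Rightarrow> 'p set \<Rightarrow> int \<Rightarrow> ('b \<Rightarrow> bit) set" where
  "boundaries D Q n = lapply (bd D) ` sub_chains D Q (n + 1)"

definition class_add :: "('b \<Rightarrow> bit) set \<Rightarrow> ('b \<Rightarrow> bit) set \<Rightarrow> ('b \<Rightarrow> bit) set" where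
  "class_add A B = {(\<lambda>x. a x + b x) | a b. a \<in> A \<and> b \<in> B}"

definition hclass :: "('b, 'p, 'z) fcomplex_scheme \<Rightarrow> 'p set \<Rightarrow> int \<Rightarrow> ('b \<Rightarrow> bit) \<Rightarrow> ('b \<Rightarrow> bit) set" where
  "hclass D Q n c = class_add {c} (boundaries D Q n)"

definition homology :: "('b, 'p, 'z) fcomplex_scheme \<Rightarrow> 'p set \<Rightarrow> int \<Rightarrow> ('b \<Rightarrow> bit) set set" where
  "homology D Q n = hclass D Q n ` cycles D Q n"

text \<open>Map induced by the inclusion into the larger subcomplex spanned by Q.\<close>
definition induced_incl :: "('b, 'p, 'z) fcomplex_scheme \<Rightarrow> 'p set \<Rightarrow> int \<Rightarrow> ('b \<Rightarrow> bit) set \<Rightarrow> ('b \<Rightarrow> bit) set" where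
  "induced_incl D Q n A = class_add A (boundaries D Q n)"

text \<open>\<open>\<^bold>D\<^sub>p\<^sub>i\<close>: grades \<open>p\<^sub>1,\<dots>,p\<^sub>i\<close> (0-indexed: \<open>ps!0,\<dots>,ps!i\<close>).\<close>
definition prefix_grades :: "'p list \<Rightarrow> nat \<Rightarrow> 'p set" where
  "prefix_grades ps i = set (take (Suc i) ps)"

text \<open>Isomorphism of the persistence modules \<open>H(\<^bold>D1,P\<^sub>f)\<close> and \<open>H(\<^bold>D2,P\<^sub>f)\<close>: for every index
  and every degree a linear (= additive, over Z2) bijection, commuting with the structure maps.\<close>
definition persistence_modules_isomorphic ::
  "'p list \<Rightarrow> ('b, 'p, 'z) fcomplex_scheme \<Rightarrow> ('c, 'p, 'w) fcomplex_scheme \<Rightarrow> bool" where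
  "persistence_modules_isomorphic ps D1 D2 \<longleftrightarrow>
     (\<exists>\<Phi> :: nat \<Rightarrow> int \<Rightarrow> ('b \<Rightarrow> bit) set \<Rightarrow> ('c \<Rightarrow> bit) set.
        (\<forall>i<length ps. \<forall>n.
           bij_betw (\<Phi> i n) (homology D1 (prefix_grades ps i) n) (homology D2 (prefix_grades ps i) n) \<and>
           (\<forall>A\<in>homology D1 (prefix_grades ps i) n. \<forall>B\<in>homology D1 (prefix_grades ps i) n.
              \<Phi> i n (class_add A B) = class_add (\<Phi> i n A) (\<Phi> i n B))) \<and>
        (\<forall>i n. Suc i < length ps \<longrightarrow>
           (\<forall>A\<in>homology D1 (prefix_grades ps i) n.
              \<Phi> (Suc i) n (induced_incl D1 (prefix_grades ps (Suc i)) n A) =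
              induced_incl D2 (prefix_grades ps (Suc i)) n (\<Phi> i n A))))"

end

theory Submission
  imports Defs
begin
declare add_bit_eq_xor[simp del] mult_bit_eq_and[simp del]

lemma bit_add_self[simp]: "(x::bit) + x = 0"
  by (cases x) auto

lemma bit_minus_eq_plus: "(x::bit) - y = x + y"
  by (cases x; cases y) auto

lemma lapply_eq_sum:
  assumes "finite S" "supp c \<subseteq> S"
  shows "lapply h c y = (\<Sum>b\<in>S. c b * h b y)"
  unfolding lapply_def
  by (rule sum.mono_neutral_left) (use assms in \<open>auto simp: supp_def\<close>)

lemma supp_lapply: "supp (lapply h c) \<subseteq> (\<Union>b\<in>supp c. supp (h b))"
proof
  fix y assume "y \<in> supp (lapply h c)"
  then have "(\<Sum>b\<in>supp c. c b * h b y) \<noteq> 0" by (simp add: supp_def lapply_def)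
  then obtain b where "b \<in> supp c" "c b * h b y \<noteq> 0"
    by (meson sum.not_neutral_contains_not_neutral)
  then show "y \<in> (\<Union>b\<in>supp c. supp (h b))" by (auto simp: supp_def)
qed

lemma finite_supp_lapply:
  assumes "finite (supp c)" "\<forall>b\<in>supp c. finite (supp (h b))"
  shows "finite (supp (lapply h c))"
  using supp_lapply[of h c] assms by (meson finite_UN_I finite_subset)

lemma supp_add: "supp (\<lambda>x. a x + b x) \<subseteq> supp a \<union> supp b"
  by (auto simp: supp_def)

lemma lapply_add:
  assumes "finite (supp a)" "finite (supp b)"
  shows "lapply h (\<lambda>x. a x + b x) = (\<lambda>y. lapply h a y + lapply h b y)"
proof
  fix y
  let ?S = "supp a \<union> supp b"
  have f: "finite ?S" using assms by auto
  have "lapply h (\<lambda>x. a x + b x) y = (\<Sum>x\<in>?S. (a x + b x) * h x y)"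
    by (rule lapply_eq_sum[OF f supp_add])
  also have "\<dots> = (\<Sum>x\<in>?S. a x * h x y) + (\<Sum>x\<in>?S. b x * h x y)"
    by (simp add: distrib_right sum.distrib)
  also have "\<dots> = lapply h a y + lapply h b y"
    using lapply_eq_sum[OF f, of a h y] lapply_eq_sum[OF f, of b h y] by auto
  finally show "lapply h (\<lambda>x. a x + b x) y = lapply h a y + lapply h b y" .
qed

lemma lapply_zero[simp]: "lapply h (\<lambda>_. 0) = (\<lambda>_. 0)"
  by (simp add: lapply_def supp_def)

lemma supp_zero[simp]: "supp (\<lambda>_. 0) = {}"
  by (simp add: supp_def)

lemma lapply_cong:
  assumes "\<forall>b\<in>supp c. h b = h' b"
  shows "lapply h c = lapply h' c"
  using assms unfolding lapply_def by auto

lemma lapply_comp: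
  assumes "finite (supp c)" "\<forall>b\<in>supp c. finite (supp (h b))"
  shows "lapply g (lapply h c) = lapply (\<lambda>b. lapply g (h b)) c"
proof
  fix z
  let ?T = "\<Union>b\<in>supp c. supp (h b)"
  have fT: "finite ?T" using assms by auto
  have "lapply g (lapply h c) z = (\<Sum>y\<in>?T. lapply h c y * g y z)"
    by (rule lapply_eq_sum[OF fT supp_lapply])
  also have "\<dots> = (\<Sum>y\<in>?T. (\<Sum>b\<in>supp c. c b * h b y) * g y z)"
    by (simp add: lapply_def)
  also have "\<dots> = (\<Sum>y\<in>?T. \<Sum>b\<in>supp c. c b * (h b y * g y z))"
    by (simp add: sum_distrib_right mult.assoc)
  also have "\<dots> = (\<Sum>b\<in>supp c. \<Sum>y\<in>?T. c b * (h b y * g y z))"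
    by (rule sum.swap)
  also have "\<dots> = (\<Sum>b\<in>supp c. c b * lapply g (h b) z)"
  proof (rule sum.cong[OF refl])
    fix b assume b: "b \<in> supp c"
    have "lapply g (h b) z = (\<Sum>y\<in>?T. h b y * g y z)"
      by (rule lapply_eq_sum[OF fT]) (use b in auto)
    then show "(\<Sum>y\<in>?T. c b * (h b y * g y z)) = c b * lapply g (h b) z"
      by (simp add: sum_distrib_left)
  qed
  also have "\<dots> = lapply (\<lambda>b. lapply g (h b)) c z" by (simp add: lapply_def)
  finally show "lapply g (lapply h c) z = lapply (\<lambda>b. lapply g (h b)) c z" .
qed

lemma lapply_id:
  assumes "finite (supp c)"
  shows "lapply id_map c = c"
proof
  fix y
  show "lapply id_map c y = c y"
  proof (cases "y \<in> supp c")
    case True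
    have "lapply id_map c y = (\<Sum>b\<in>supp c. c b * (if y = b then 1 else 0))"
      by (simp add: lapply_def id_map_def)
    also have "\<dots> = c y" using True assms
      by (simp add: if_distrib[of "\<lambda>x. _ * x"] sum.delta' eq_commute[of y] cong: if_cong)
    finally show ?thesis .
  next
    case False
    then show ?thesis by (auto simp: lapply_def id_map_def supp_def intro!: sum.neutral)
  qed
qed

lemma lapply_hplus:
  "lapply (\<lambda>b y. h b y + g b y) c = (\<lambda>y. lapply h c y + lapply g c y)"
  by (simp add: lapply_def distrib_left sum.distrib)

lemma bit_add_cancel1[simp]: "(a::bit) + (a + b) = b"
  by (cases a; cases b) auto
lemma bit_add_cancel2[simp]: "(a::bit) + b + b = a"
  by (cases a; cases b) auto

definition good_Q :: "('p \<times> 'p) set \<Rightarrow> ('b, 'p, 'z) fcomplex_scheme \<Rightarrow> 'p set \<Rightarrow> bool" where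
  "good_Q r D Q \<longleftrightarrow> (\<forall>b\<in>gens D. \<forall>p\<in>Q. (grade D b, p) \<in> r \<longrightarrow> grade D b \<in> Q)"

definition fin_bd :: "('b, 'p, 'z) fcomplex_scheme \<Rightarrow> bool" where
  "fin_bd D \<longleftrightarrow> (\<forall>b\<in>gens D. finite (supp (bd D b)))"

lemma sub_chains_add:
  assumes "a \<in> sub_chains D Q n" "b \<in> sub_chains D Q n"
  shows "(\<lambda>x. a x + b x) \<in> sub_chains D Q n"
proof -
  have fa: "finite (supp a)" and ga: "supp a \<subseteq> gens D" and da: "\<forall>y\<in>supp a. deg D y = n"
    and qa: "\<forall>y\<in>supp a. grade D y \<in> Q"
    using assms(1) unfolding sub_chains_def hom_deg_def is_chain_in_def by blast+
  have fb: "finite (supp b)" and gb: "supp b \<subseteq> gens D" and db: "\<forall>y\<in>supp b. deg D y = n"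
    and qb: "\<forall>y\<in>supp b. grade D y \<in> Q"
    using assms(2) unfolding sub_chains_def hom_deg_def is_chain_in_def by blast+
  have s: "supp (\<lambda>x. a x + b x) \<subseteq> supp a \<union> supp b" by (rule supp_add)
  have "finite (supp (\<lambda>x. a x + b x))" using fa fb s finite_subset by blast
  moreover have "supp (\<lambda>x. a x + b x) \<subseteq> gens D" using s ga gb by blast
  moreover have "\<forall>y\<in>supp (\<lambda>x. a x + b x). deg D y = n \<and> grade D y \<in> Q"
    using s da db qa qb by blast
  ultimately show ?thesis unfolding sub_chains_def hom_deg_def is_chain_in_def by blast
qed

lemma sub_chains_zero[simp]: "(\<lambda>_. 0) \<in> sub_chains D Q n"
  by (simp add: sub_chains_def hom_deg_def is_chain_in_def)

lemma sub_chains_fin: "c \<in> sub_chains D Q n \<Longrightarrow> finite (supp c)"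
  by (simp add: sub_chains_def hom_deg_def is_chain_in_def)

lemma sub_chains_gens: "c \<in> sub_chains D Q n \<Longrightarrow> supp c \<subseteq> gens D"
  by (simp add: sub_chains_def hom_deg_def is_chain_in_def)

lemma sub_chains_mono: "Q \<subseteq> Q' \<Longrightarrow> sub_chains D Q n \<subseteq> sub_chains D Q' n"
  by (auto simp: sub_chains_def)

lemma lapply_sub_chains:
  assumes c: "c \<in> sub_chains D1 Q n"
    and hd: "\<forall>b\<in>gens D1. hom_deg D2 (deg D1 b + k) (h b)"
    and fm: "filtered_map r D1 D2 h"
    and gq: "good_Q r D2 Q"
  shows "lapply h c \<in> sub_chains D2 Q (n + k)"
proof -
  have cg: "supp c \<subseteq> gens D1" and cf: "finite (supp c)" and cd: "\<forall>b\<in>supp c. deg D1 b = n"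
    and cq: "\<forall>b\<in>supp c. grade D1 b \<in> Q"
    using c unfolding sub_chains_def hom_deg_def is_chain_in_def by blast+
  have hf: "\<forall>b\<in>gens D1. finite (supp (h b)) \<and> supp (h b) \<subseteq> gens D2 \<and> (\<forall>y\<in>supp (h b). deg D2 y = deg D1 b + k)"
    using hd unfolding hom_deg_def is_chain_in_def by blast
  have fin: "finite (supp (lapply h c))"
    by (rule finite_supp_lapply[OF cf]) (use hf cg in blast)
  have "\<forall>y\<in>supp (lapply h c). y \<in> gens D2 \<and> deg D2 y = n + k \<and> grade D2 y \<in> Q"
  proof
    fix y assume "y \<in> supp (lapply h c)"
    then have "y \<in> (\<Union>b\<in>supp c. supp (h b))" using supp_lapply[of h c] by (rule subsetD[rotated])
    then obtain b where b: "b \<in> supp c" "y \<in> supp (h b)" by (rule UN_E)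
    have bg: "b \<in> gens D1" using b cg by blast
    have yg: "y \<in> gens D2" and yd: "deg D2 y = deg D1 b + k"
      using hf bg b by blast+
    have "h b y \<noteq> 0" using b(2) unfolding supp_def by simp
    then have "(grade D2 y, grade D1 b) \<in> r" using fm bg unfolding filtered_map_def by blast
    moreover have "grade D1 b \<in> Q" using cq b by blast
    ultimately have "grade D2 y \<in> Q" using gq yg unfolding good_Q_def by blast
    moreover have "deg D2 y = n + k" using yd cd b by simp
    ultimately show "y \<in> gens D2 \<and> deg D2 y = n + k \<and> grade D2 y \<in> Q" using yg by blast
  qed
  then show ?thesis using fin unfolding sub_chains_def hom_deg_def is_chain_in_def by blast
qed

lemma bnd_zero: "(\<lambda>_. 0) \<in> boundaries D Q n"
proof -
  have "lapply (bd D) (\<lambda>_. 0) = (\<lambda>_. 0)" by (rule lapply_zero)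
  then show ?thesis unfolding boundaries_def using sub_chains_zero by (metis image_eqI)
qed

lemma bnd_fin:
  assumes "fin_bd D" "x \<in> boundaries D Q n"
  shows "finite (supp x)"
proof -
  obtain a where a: "a \<in> sub_chains D Q (n+1)" "x = lapply (bd D) a"
    using assms(2) unfolding boundaries_def by blast
  have "\<forall>b\<in>supp a. finite (supp (bd D b))"
    using assms(1) sub_chains_gens[OF a(1)] unfolding fin_bd_def by blast
  then show ?thesis using finite_supp_lapply[OF sub_chains_fin[OF a(1)]] a(2) by blast
qed

lemma bnd_add:
  assumes "x \<in> boundaries D Q n" "y \<in> boundaries D Q n"
  shows "(\<lambda>z. x z + y z) \<in> boundaries D Q n"
proof -
  obtain a b where a: "a \<in> sub_chains D Q (n+1)" "x = lapply (bd D) a"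
    and b: "b \<in> sub_chains D Q (n+1)" "y = lapply (bd D) b"
    using assms unfolding boundaries_def by blast
  have "(\<lambda>z. x z + y z) = lapply (bd D) (\<lambda>z. a z + b z)"
    using a b by (simp add: lapply_add sub_chains_fin)
  then show ?thesis unfolding boundaries_def using sub_chains_add[OF a(1) b(1)] by blast
qed

lemma bnd_mono: "Q \<subseteq> Q' \<Longrightarrow> boundaries D Q n \<subseteq> boundaries D Q' n"
  unfolding boundaries_def using sub_chains_mono by blast

definition subgrp :: "('b \<Rightarrow> bit) set \<Rightarrow> bool" where
  "subgrp B \<longleftrightarrow> (\<lambda>_. 0) \<in> B \<and> (\<forall>x\<in>B. \<forall>y\<in>B. (\<lambda>z. x z + y z) \<in> B)"

lemma subgrp_bnd: "subgrp (boundaries D Q n)"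
  by (simp add: subgrp_def bnd_zero bnd_add)

lemma class_addI:
  assumes "a \<in> A" "b \<in> B" "v = (\<lambda>x. a x + b x)"
  shows "v \<in> class_add A B"
  using assms unfolding class_add_def by blast

lemma coset_shift:
  assumes "subgrp B" "b0 \<in> B"
  shows "class_add {\<lambda>x. c x + b0 x} B = class_add {c} B"
proof
  show "class_add {\<lambda>x. c x + b0 x} B \<subseteq> class_add {c} B"
  proof
    fix v assume "v \<in> class_add {\<lambda>x. c x + b0 x} B"
    then obtain b where b: "b \<in> B" "v = (\<lambda>x. c x + b0 x + b x)" by (auto simp: class_add_def)
    have "(\<lambda>x. b0 x + b x) \<in> B" using assms b by (auto simp: subgrp_def)
    moreover have "v = (\<lambda>x. c x + (b0 x + b x))" using b by (simp add: add.assoc)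
    ultimately show "v \<in> class_add {c} B" by (auto simp: class_add_def)
  qed
next
  show "class_add {c} B \<subseteq> class_add {\<lambda>x. c x + b0 x} B"
  proof
    fix v assume "v \<in> class_add {c} B"
    then obtain b where b: "b \<in> B" "v = (\<lambda>x. c x + b x)" by (auto simp: class_add_def)
    have "(\<lambda>x. b0 x + b x) \<in> B" using assms b by (auto simp: subgrp_def)
    moreover have "v = (\<lambda>x. (c x + b0 x) + (b0 x + b x))" using b by (simp add: add.assoc)
    ultimately show "v \<in> class_add {\<lambda>x. c x + b0 x} B" by (rule class_addI[OF singletonI])
  qed
qed

lemma coset_add:
  assumes "subgrp B"
  shows "class_add (class_add {a} B) (class_add {b} B) = class_add {\<lambda>x. a x + b x} B"
proof
  show "class_add (class_add {a} B) (class_add {b} B) \<subseteq> class_add {\<lambda>x. a x + b x} B"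
  proof
    fix v assume "v \<in> class_add (class_add {a} B) (class_add {b} B)"
    then obtain u w where u: "u \<in> B" and w: "w \<in> B"
      and v: "v = (\<lambda>x. (a x + u x) + (b x + w x))" by (auto simp: class_add_def)
    have "(\<lambda>x. u x + w x) \<in> B" using assms u w by (auto simp: subgrp_def)
    moreover have "v = (\<lambda>x. (a x + b x) + (u x + w x))" using v by (simp add: ac_simps)
    ultimately show "v \<in> class_add {\<lambda>x. a x + b x} B" by (auto simp: class_add_def)
  qed
next
  show "class_add {\<lambda>x. a x + b x} B \<subseteq> class_add (class_add {a} B) (class_add {b} B)"
  proof
    fix v assume "v \<in> class_add {\<lambda>x. a x + b x} B"
    then obtain u where u: "u \<in> B" and v: "v = (\<lambda>x. (a x + b x) + u x)" by (auto simp: class_add_def)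
    have z: "(\<lambda>_. 0) \<in> B" using assms by (simp add: subgrp_def)
    have "v = (\<lambda>x. (a x + u x) + (b x + 0))" using v by (simp add: ac_simps)
    then show "v \<in> class_add (class_add {a} B) (class_add {b} B)"
      by (rule class_addI[OF class_addI[OF singletonI u refl] class_addI[OF singletonI z refl]])
  qed
qed

lemma coset_absorb:
  assumes "subgrp B'" "B \<subseteq> B'" "subgrp B"
  shows "class_add (class_add {c} B) B' = class_add {c} B'"
proof
  show "class_add (class_add {c} B) B' \<subseteq> class_add {c} B'"
  proof
    fix v assume "v \<in> class_add (class_add {c} B) B'"
    then obtain u w where u: "u \<in> B" and w: "w \<in> B'"
      and v: "v = (\<lambda>x. (c x + u x) + w x)" by (auto simp: class_add_def)
    have "(\<lambda>x. u x + w x) \<in> B'" using assms u w by (auto simp: subgrp_def)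
    moreover have "v = (\<lambda>x. c x + (u x + w x))" using v by (simp add: ac_simps)
    ultimately show "v \<in> class_add {c} B'" by (auto simp: class_add_def)
  qed
next
  show "class_add {c} B' \<subseteq> class_add (class_add {c} B) B'"
  proof
    fix v assume "v \<in> class_add {c} B'"
    then obtain w where w: "w \<in> B'" and v: "v = (\<lambda>x. c x + w x)" by (auto simp: class_add_def)
    have z: "(\<lambda>_. 0) \<in> B" using assms by (simp add: subgrp_def)
    have "v = (\<lambda>x. (c x + 0) + w x)" using v by simp
    then show "v \<in> class_add (class_add {c} B) B'"
      by (rule class_addI[OF class_addI[OF singletonI z refl] w])
  qed
qed

lemma coset_image:
  assumes "subgrp B1" "subgrp B2"
    and "\<forall>b\<in>B1. g (\<lambda>x. c x + b x) = (\<lambda>y. g c y + g b y) \<and> g b \<in> B2"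
  shows "class_add (g ` class_add {c} B1) B2 = class_add {g c} B2"
proof
  show "class_add (g ` class_add {c} B1) B2 \<subseteq> class_add {g c} B2"
  proof
    fix v assume "v \<in> class_add (g ` class_add {c} B1) B2"
    then obtain u w where u: "u \<in> B1" and w: "w \<in> B2"
      and v: "v = (\<lambda>x. g (\<lambda>x. c x + u x) x + w x)" by (auto simp: class_add_def)
    have gu: "g u \<in> B2" and ge: "g (\<lambda>x. c x + u x) = (\<lambda>y. g c y + g u y)" using assms u by auto
    have "(\<lambda>x. g u x + w x) \<in> B2" using assms gu w by (auto simp: subgrp_def)
    moreover have "v = (\<lambda>x. g c x + (g u x + w x))" using v ge by (simp add: ac_simps)
    ultimately show "v \<in> class_add {g c} B2" by (auto simp: class_add_def)
  qed
next
  show "class_add {g c} B2 \<subseteq> class_add (g ` class_add {c} B1) B2"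
  proof
    fix v assume "v \<in> class_add {g c} B2"
    then obtain w where w: "w \<in> B2" and v: "v = (\<lambda>x. g c x + w x)" by (auto simp: class_add_def)
    have z: "(\<lambda>_. 0) \<in> B1" using assms by (simp add: subgrp_def)
    have c0: "(\<lambda>x. c x + (0::bit)) = c" by simp
    have "c \<in> class_add {c} B1" using z c0 unfolding class_add_def by force
    moreover have "v = (\<lambda>x. g c x + w x)" by (rule v)
    ultimately show "v \<in> class_add (g ` class_add {c} B1) B2"
      using w unfolding class_add_def by blast
  qed
qed


lemma chain_commute:
  assumes "finite (supp c)" "supp c \<subseteq> gens D1" "fin_bd D1" "filtered_chain_map r D1 D2 \<phi>"
  shows "lapply (bd D2) (lapply \<phi> c) = lapply \<phi> (lapply (bd D1) c)"
proof -
  have fphi: "\<forall>b\<in>supp c. finite (supp (\<phi> b))" and com: "\<forall>b\<in>supp c. lapply (bd D2) (\<phi> b) = lapply \<phi> (bd D1 b)"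
    using assms unfolding filtered_chain_map_def hom_deg_def is_chain_in_def by blast+
  have fbd: "\<forall>b\<in>supp c. finite (supp (bd D1 b))" using assms unfolding fin_bd_def by blast
  have "lapply (bd D2) (lapply \<phi> c) = lapply (\<lambda>b. lapply (bd D2) (\<phi> b)) c"
    by (rule lapply_comp[OF assms(1) fphi])
  also have "\<dots> = lapply (\<lambda>b. lapply \<phi> (bd D1 b)) c" by (rule lapply_cong) (use com in auto)
  also have "\<dots> = lapply \<phi> (lapply (bd D1) c)" by (rule lapply_comp[OF assms(1) fbd, symmetric])
  finally show ?thesis .
qed

lemma homotopy_chain:
  assumes fc: "finite (supp c)" and cg: "supp c \<subseteq> gens D1" and f1: "fin_bd D1"
    and cm: "filtered_chain_map r D1 D2 \<phi>"
    and Sd: "\<forall>b\<in>gens D1. hom_deg D1 (deg D1 b + 1) (S b)"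
    and Se: "\<forall>b\<in>gens D1. (\<lambda>y. comp_map \<phi> \<phi>' b y - id_map b y) =
                         (\<lambda>y. lapply (bd D1) (S b) y + lapply S (bd D1 b) y)"
  shows "lapply \<phi>' (lapply \<phi> c) = (\<lambda>y. c y + (lapply (bd D1) (lapply S c) y + lapply S (lapply (bd D1) c) y))"
proof -
  have fphi: "\<forall>b\<in>supp c. finite (supp (\<phi> b))"
    using cm cg unfolding filtered_chain_map_def hom_deg_def is_chain_in_def by blast
  have fS: "\<forall>b\<in>supp c. finite (supp (S b))"
    using Sd cg unfolding hom_deg_def is_chain_in_def by blast
  have fbd: "\<forall>b\<in>supp c. finite (supp (bd D1 b))" using f1 cg unfolding fin_bd_def by blast
  have eq: "\<forall>b\<in>supp c. lapply \<phi>' (\<phi> b) = (\<lambda>y. id_map b y + (lapply (bd D1) (S b) y + lapply S (bd D1 b) y))"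
  proof
    fix b assume "b \<in> supp c"
    then have "(\<lambda>y. comp_map \<phi> \<phi>' b y - id_map b y) = (\<lambda>y. lapply (bd D1) (S b) y + lapply S (bd D1 b) y)"
      using Se cg by blast
    then have "\<forall>y. comp_map \<phi> \<phi>' b y + id_map b y = lapply (bd D1) (S b) y + lapply S (bd D1 b) y"
      by (simp add: bit_minus_eq_plus fun_eq_iff)
    then show "lapply \<phi>' (\<phi> b) = (\<lambda>y. id_map b y + (lapply (bd D1) (S b) y + lapply S (bd D1 b) y))"
      unfolding comp_map_def fun_eq_iff
      by (metis add.commute bit_add_cancel1)
  qed
  have "lapply \<phi>' (lapply \<phi> c) = lapply (\<lambda>b. lapply \<phi>' (\<phi> b)) c"
    by (rule lapply_comp[OF fc fphi])
  also have "\<dots> = lapply (\<lambda>b y. id_map b y + (lapply (bd D1) (S b) y + lapply S (bd D1 b) y)) c"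
    by (rule lapply_cong) (use eq in auto)
  also have "\<dots> = (\<lambda>y. lapply id_map c y + (lapply (\<lambda>b. lapply (bd D1) (S b)) c y + lapply (\<lambda>b. lapply S (bd D1 b)) c y))"
    by (simp only: lapply_hplus)
  also have "lapply (\<lambda>b. lapply (bd D1) (S b)) c = lapply (bd D1) (lapply S c)"
    by (rule lapply_comp[OF fc fS, symmetric])
  also have "lapply (\<lambda>b. lapply S (bd D1 b)) c = lapply S (lapply (bd D1) c)"
    by (rule lapply_comp[OF fc fbd, symmetric])
  also have "lapply id_map c = c" by (rule lapply_id[OF fc])
  finally show ?thesis .
qed

definition hmap :: "('c, 'p, 'w) fcomplex_scheme \<Rightarrow> ('b \<Rightarrow> 'c \<Rightarrow> bit) \<Rightarrow> 'p set \<Rightarrow> int \<Rightarrow> ('b \<Rightarrow> bit) set \<Rightarrow> ('c \<Rightarrow> bit) set" where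
  "hmap D2 h Q n A = class_add (lapply h ` A) (boundaries D2 Q n)"

lemma map_sub_chains0:
  assumes "c \<in> sub_chains D1 Q n" "filtered_chain_map r D1 D2 \<phi>" "good_Q r D2 Q"
  shows "lapply \<phi> c \<in> sub_chains D2 Q n"
  using lapply_sub_chains[OF assms(1), of D2 0 \<phi> r] assms(2,3)
  unfolding filtered_chain_map_def by simp

lemma hmap_hclass:
  assumes c: "c \<in> sub_chains D1 Q n" and f1: "fin_bd D1"
    and cm: "filtered_chain_map r D1 D2 \<phi>" and g2: "good_Q r D2 Q"
  shows "hmap D2 \<phi> Q n (hclass D1 Q n c) = hclass D2 Q n (lapply \<phi> c)"
  unfolding hmap_def hclass_def
proof (rule coset_image[OF subgrp_bnd subgrp_bnd], intro ballI conjI)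
  fix b assume b: "b \<in> boundaries D1 Q n"
  show "lapply \<phi> (\<lambda>x. c x + b x) = (\<lambda>y. lapply \<phi> c y + lapply \<phi> b y)"
    by (rule lapply_add[OF sub_chains_fin[OF c] bnd_fin[OF f1 b]])
  obtain x where x: "x \<in> sub_chains D1 Q (n+1)" "b = lapply (bd D1) x"
    using b unfolding boundaries_def by auto
  have "lapply \<phi> b = lapply (bd D2) (lapply \<phi> x)"
    using chain_commute[OF sub_chains_fin[OF x(1)] sub_chains_gens[OF x(1)] f1 cm] x(2) by simp
  moreover have "lapply \<phi> x \<in> sub_chains D2 Q (n+1)" by (rule map_sub_chains0[OF x(1) cm g2])
  ultimately show "lapply \<phi> b \<in> boundaries D2 Q n" unfolding boundaries_def by auto
qed

lemma cycle_map:
  assumes c: "c \<in> cycles D1 Q n" and f1: "fin_bd D1"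
    and cm: "filtered_chain_map r D1 D2 \<phi>" and g2: "good_Q r D2 Q"
  shows "lapply \<phi> c \<in> cycles D2 Q n"
proof -
  have cs: "c \<in> sub_chains D1 Q n" and z: "lapply (bd D1) c = (\<lambda>_. 0)" using c by (auto simp: cycles_def)
  have "lapply (bd D2) (lapply \<phi> c) = (\<lambda>_. 0)"
    using chain_commute[OF sub_chains_fin[OF cs] sub_chains_gens[OF cs] f1 cm] z by simp
  then show ?thesis using map_sub_chains0[OF cs cm g2] by (simp add: cycles_def)
qed

lemma transfer:
  assumes f1: "fin_bd D1" and f2: "fin_bd D2"
    and cm: "filtered_chain_map r D1 D2 \<phi>" and cm': "filtered_chain_map r D2 D1 \<phi>'"
    and ho: "filtered_homotopic r D1 D1 id_map (comp_map \<phi> \<phi>')"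
    and g1: "good_Q r D1 Q" and g2: "good_Q r D2 Q"
    and A: "A \<in> homology D1 Q n"
  shows "hmap D2 \<phi> Q n A \<in> homology D2 Q n \<and> hmap D1 \<phi>' Q n (hmap D2 \<phi> Q n A) = A"
proof -
  obtain c where c: "c \<in> cycles D1 Q n" and Ac: "A = hclass D1 Q n c" using A by (auto simp: homology_def)
  have cs: "c \<in> sub_chains D1 Q n" and z: "lapply (bd D1) c = (\<lambda>_. 0)" using c by (auto simp: cycles_def)
  have pc: "lapply \<phi> c \<in> cycles D2 Q n" by (rule cycle_map[OF c f1 cm g2])
  have h1: "hmap D2 \<phi> Q n A = hclass D2 Q n (lapply \<phi> c)" using hmap_hclass[OF cs f1 cm g2] Ac by simp
  have h2: "hmap D1 \<phi>' Q n (hclass D2 Q n (lapply \<phi> c)) = hclass D1 Q n (lapply \<phi>' (lapply \<phi> c))"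
    using hmap_hclass[OF _ f2 cm' g1] pc by (simp add: cycles_def)
  obtain S where Sd: "\<forall>b\<in>gens D1. hom_deg D1 (deg D1 b + 1) (S b)" and Sf: "filtered_map r D1 D1 S"
    and Se: "\<forall>b\<in>gens D1. (\<lambda>y. comp_map \<phi> \<phi>' b y - id_map b y) =
                         (\<lambda>y. lapply (bd D1) (S b) y + lapply S (bd D1 b) y)"
    using ho unfolding filtered_homotopic_def by blast
  have "lapply \<phi>' (lapply \<phi> c) = (\<lambda>y. c y + (lapply (bd D1) (lapply S c) y + lapply S (lapply (bd D1) c) y))"
    by (rule homotopy_chain[OF sub_chains_fin[OF cs] sub_chains_gens[OF cs] f1 cm Sd Se])
  also have "\<dots> = (\<lambda>y. c y + lapply (bd D1) (lapply S c) y)" using z by simp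
  finally have e: "lapply \<phi>' (lapply \<phi> c) = (\<lambda>y. c y + lapply (bd D1) (lapply S c) y)" .
  have "lapply S c \<in> sub_chains D1 Q (n+1)" by (rule lapply_sub_chains[OF cs Sd Sf g1])
  then have w: "lapply (bd D1) (lapply S c) \<in> boundaries D1 Q n" unfolding boundaries_def by auto
  have "hclass D1 Q n (lapply \<phi>' (lapply \<phi> c)) = hclass D1 Q n c"
    unfolding e hclass_def by (rule coset_shift[OF subgrp_bnd w])
  then show ?thesis using h1 h2 Ac pc by (auto simp: homology_def)
qed

lemma hmap_add:
  assumes f1: "fin_bd D1" and cm: "filtered_chain_map r D1 D2 \<phi>" and g2: "good_Q r D2 Q"
    and A: "A \<in> homology D1 Q n" and B: "B \<in> homology D1 Q n"
  shows "hmap D2 \<phi> Q n (class_add A B) = class_add (hmap D2 \<phi> Q n A) (hmap D2 \<phi> Q n B)"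
proof -
  obtain a where a: "a \<in> sub_chains D1 Q n" and Aa: "A = hclass D1 Q n a" using A by (auto simp: homology_def cycles_def)
  obtain b where b: "b \<in> sub_chains D1 Q n" and Bb: "B = hclass D1 Q n b" using B by (auto simp: homology_def cycles_def)
  have AB: "class_add A B = hclass D1 Q n (\<lambda>x. a x + b x)"
    unfolding Aa Bb hclass_def by (rule coset_add[OF subgrp_bnd])
  have "hmap D2 \<phi> Q n (class_add A B) = hclass D2 Q n (lapply \<phi> (\<lambda>x. a x + b x))"
    unfolding AB by (rule hmap_hclass[OF sub_chains_add[OF a b] f1 cm g2])
  also have "\<dots> = hclass D2 Q n (\<lambda>y. lapply \<phi> a y + lapply \<phi> b y)"
    by (simp add: lapply_add sub_chains_fin[OF a] sub_chains_fin[OF b])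
  also have "\<dots> = class_add (hclass D2 Q n (lapply \<phi> a)) (hclass D2 Q n (lapply \<phi> b))"
    unfolding hclass_def by (rule coset_add[OF subgrp_bnd, symmetric])
  also have "\<dots> = class_add (hmap D2 \<phi> Q n A) (hmap D2 \<phi> Q n B)"
    using hmap_hclass[OF a f1 cm g2] hmap_hclass[OF b f1 cm g2] Aa Bb by simp
  finally show ?thesis .
qed

lemma hmap_incl:
  assumes f1: "fin_bd D1" and cm: "filtered_chain_map r D1 D2 \<phi>"
    and g2: "good_Q r D2 Q" and g2': "good_Q r D2 Q'" and QQ: "Q \<subseteq> Q'"
    and A: "A \<in> homology D1 Q n"
  shows "hmap D2 \<phi> Q' n (induced_incl D1 Q' n A) = induced_incl D2 Q' n (hmap D2 \<phi> Q n A)"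
proof -
  obtain a where a: "a \<in> sub_chains D1 Q n" and Aa: "A = hclass D1 Q n a" using A by (auto simp: homology_def cycles_def)
  have a': "a \<in> sub_chains D1 Q' n" using a sub_chains_mono[OF QQ] by auto
  have "induced_incl D1 Q' n A = hclass D1 Q' n a"
    unfolding Aa induced_incl_def hclass_def by (rule coset_absorb[OF subgrp_bnd bnd_mono[OF QQ] subgrp_bnd])
  then have "hmap D2 \<phi> Q' n (induced_incl D1 Q' n A) = hclass D2 Q' n (lapply \<phi> a)"
    using hmap_hclass[OF a' f1 cm g2'] by simp
  also have "\<dots> = induced_incl D2 Q' n (hclass D2 Q n (lapply \<phi> a))"
    unfolding induced_incl_def hclass_def by (rule coset_absorb[OF subgrp_bnd bnd_mono[OF QQ] subgrp_bnd, symmetric])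
  also have "\<dots> = induced_incl D2 Q' n (hmap D2 \<phi> Q n A)"
    using hmap_hclass[OF a f1 cm g2] Aa by simp
  finally show ?thesis .
qed


lemma good_prefix:
  assumes co: "compatible_order P r fv ps" and gP: "\<forall>b\<in>gens D. grade D b \<in> P"
  shows "good_Q r D (prefix_grades ps i)"
  unfolding good_Q_def
proof (intro ballI impI)
  fix b p assume b: "b \<in> gens D" and p: "p \<in> prefix_grades ps i" and rel: "(grade D b, p) \<in> r"
  have setps: "set ps = P" and ord: "\<forall>i<length ps. \<forall>j<length ps. (ps ! i, ps ! j) \<in> r \<longrightarrow> i \<le> j"
    using co unfolding compatible_order_def by blast+
  have "grade D b \<in> set ps" using gP b setps by blast
  then obtain j' where j': "j' < length ps" "ps ! j' = grade D b" by (auto simp: in_set_conv_nth)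
  from p obtain j where j: "j < length (take (Suc i) ps)" "take (Suc i) ps ! j = p"
    unfolding prefix_grades_def by (auto simp: in_set_conv_nth)
  have jl: "j < length ps" "j < Suc i" using j(1) by auto
  have pj: "ps ! j = p" using j jl by simp
  have "(ps ! j', ps ! j) \<in> r" using rel j'(2) pj by simp
  then have "j' \<le> j" using ord j'(1) jl(1) by blast
  then have "j' < length (take (Suc i) ps)" using j' jl by simp
  moreover have "take (Suc i) ps ! j' = grade D b" using j' \<open>j' \<le> j\<close> jl by simp
  ultimately show "grade D b \<in> prefix_grades ps i" unfolding prefix_grades_def
    by (metis nth_mem)
qed

lemma prefix_mono: "prefix_grades ps i \<subseteq> prefix_grades ps (Suc i)"
  unfolding prefix_grades_def by (rule set_take_subset_set_take) simp

lemma morse_fin_bd: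
  assumes "finite K"
  shows "fin_bd (morse_chain_complex K P M)"
proof -
  have "\<forall>\<sigma>. supp (\<lambda>\<tau>. if \<tau> \<in> K \<and> \<tau> \<subseteq> \<sigma> \<and> card \<tau> + 1 = card \<sigma> then (1::bit) else 0) \<subseteq> K"
    by (auto simp: supp_def split: if_splits)
  then show ?thesis using assms unfolding fin_bd_def morse_chain_complex_def
    by (auto intro: finite_subset)
qed

lemma morse_grade:
  assumes md: "morse_decomposition K \<V> P r M"
  shows "\<forall>b\<in>gens (morse_chain_complex K P M). grade (morse_chain_complex K P M) b \<in> P"
proof
  fix \<sigma> assume "\<sigma> \<in> gens (morse_chain_complex K P M)"
  then have s: "\<sigma> \<in> K" by (simp add: morse_chain_complex_def)
  have un: "(\<Union>p\<in>P. M p) = K" and dj: "\<forall>p\<in>P. \<forall>q\<in>P. p \<noteq> q \<longrightarrow> M p \<inter> M q = {}"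
    using md unfolding morse_decomposition_def by blast+
  obtain p where p: "p \<in> P" "\<sigma> \<in> M p" using s un by blast
  have "\<exists>!p. p \<in> P \<and> \<sigma> \<in> M p"
  proof (rule ex1I[of _ p])
    show "p \<in> P \<and> \<sigma> \<in> M p" using p by blast
    fix q assume "q \<in> P \<and> \<sigma> \<in> M q"
    then show "q = p" using dj p by blast
  qed
  then have "(THE p. p \<in> P \<and> \<sigma> \<in> M p) \<in> P" by (rule theI'[THEN conjunct1])
  then show "grade (morse_chain_complex K P M) \<sigma> \<in> P" by (simp add: morse_chain_complex_def)
qed

lemma filtered_fin_bd:
  assumes "filtered_complex P r D"
  shows "fin_bd D"
  using assms unfolding filtered_complex_def fin_bd_def hom_deg_def is_chain_in_def by blast

lemma filtered_grade:
  assumes "filtered_complex P r D"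
  shows "\<forall>b\<in>gens D. grade D b \<in> P"
  using assms unfolding filtered_complex_def by blast

theorem proposition9:
  fixes K :: "'v set set" and \<V> :: "'v set set set"
    and P :: "'p set" and r :: "('p \<times> 'p) set" and M :: "'p \<Rightarrow> 'v set set"
    and Cbar :: "('b, 'p) fcomplex"
    and f :: "'v set \<Rightarrow> real" and fv :: "'p \<Rightarrow> real" and ps :: "'p list"
  assumes "simplicial_complex K"
    and "multivector_field K \<V>"
    and "morse_decomposition K \<V> P r M"
    and "conley_complex P r (morse_chain_complex K P M) Cbar"
    and "lyapunov P r M f fv"
    and "compatible_order P r fv ps"
  shows "persistence_modules_isomorphic ps (morse_chain_complex K P M) Cbar"
proof -
  let ?C = "morse_chain_complex K P M"
  have fK: "finite K" using assms(1) unfolding simplicial_complex_def by blast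
  have f1: "fin_bd ?C" by (rule morse_fin_bd[OF fK])
  have fc: "filtered_complex P r Cbar" and he: "filtered_chain_homotopy_equivalent r ?C Cbar"
    using assms(4) unfolding conley_complex_def by blast+
  have f2: "fin_bd Cbar" by (rule filtered_fin_bd[OF fc])
  obtain \<phi> \<phi>' where cm: "filtered_chain_map r ?C Cbar \<phi>" and cm': "filtered_chain_map r Cbar ?C \<phi>'"
    and h1: "filtered_homotopic r ?C ?C id_map (comp_map \<phi> \<phi>')"
    and h2: "filtered_homotopic r Cbar Cbar id_map (comp_map \<phi>' \<phi>)"
    using he unfolding filtered_chain_homotopy_equivalent_def by blast
  have g1: "\<And>i. good_Q r ?C (prefix_grades ps i)"
    by (rule good_prefix[OF assms(6) morse_grade[OF assms(3)]])
  have g2: "\<And>i. good_Q r Cbar (prefix_grades ps i)"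
    by (rule good_prefix[OF assms(6) filtered_grade[OF fc]])
  define \<Phi> where "\<Phi> = (\<lambda>i n. hmap Cbar \<phi> (prefix_grades ps i) n)"
  show ?thesis
    unfolding persistence_modules_isomorphic_def
  proof (intro exI[of _ \<Phi>] conjI allI impI ballI)
    fix i n
    let ?Q = "prefix_grades ps i"
    have t1: "\<forall>A\<in>homology ?C ?Q n. hmap Cbar \<phi> ?Q n A \<in> homology Cbar ?Q n \<and> hmap ?C \<phi>' ?Q n (hmap Cbar \<phi> ?Q n A) = A"
      using transfer[OF f1 f2 cm cm' h1 g1 g2] by blast
    have t2: "\<forall>A\<in>homology Cbar ?Q n. hmap ?C \<phi>' ?Q n A \<in> homology ?C ?Q n \<and> hmap Cbar \<phi> ?Q n (hmap ?C \<phi>' ?Q n A) = A"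
      using transfer[OF f2 f1 cm' cm h2 g2 g1] by blast
    show "bij_betw (\<Phi> i n) (homology ?C ?Q n) (homology Cbar ?Q n)"
      unfolding \<Phi>_def
      by (rule bij_betw_byWitness[where f' = "hmap ?C \<phi>' ?Q n"]) (use t1 t2 in blast)+
  next
    fix i n A B
    assume A: "A \<in> homology ?C (prefix_grades ps i) n" and B: "B \<in> homology ?C (prefix_grades ps i) n"
    show "\<Phi> i n (class_add A B) = class_add (\<Phi> i n A) (\<Phi> i n B)"
      unfolding \<Phi>_def by (rule hmap_add[OF f1 cm g2 A B])
  next
    fix i n A
    assume A: "A \<in> homology ?C (prefix_grades ps i) n"
    show "\<Phi> (Suc i) n (induced_incl ?C (prefix_grades ps (Suc i)) n A) =
          induced_incl Cbar (prefix_grades ps (Suc i)) n (\<Phi> i n A)"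
      unfolding \<Phi>_def by (rule hmap_incl[OF f1 cm g2 g2 prefix_mono A])
  qed
qed

end
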